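(* Let $p=(p_i)_{i\in\mathbb{N}}\in[0,1]^{\mathbb{N}}$ be a cookie environment, and let $\overline{p}_n=\frac1n\sum_{i=1}^n p_i$ and $A_n=\frac1n\sum_{i=1}^n p_i(1-p_i)$. Suppose $\lim_{n\to\infty}\overline{p}_n=\frac12$, that $A=\lim_{n\to\infty}A_n$ exists and $A>0$, and that there is $K$ with $|\overline{p}_n-\frac12|\le\frac Kn$ and $|A_n-A|\le\frac Kn$ for all $n\in\mathbb{N}$. Then $\lim_{x\to\infty}\frac1x\mathbb{E}[(U_p(x)-x)^2]$ exists and equals $8A$. Moreover, for all sufficiently large $x$, \[ \frac1x\mathbb{E}[(U_p(x)-x)^2]=8A+O\Big(\frac{\log^4 x}{\sqrt x}\Big), \] where the implicit constant depends only on $p$.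
   Context: For a cookie environment $p$, let $B_1,B_2,\dots$ be independent Bernoulli random variables with $\Pr[B_i=1]=p_i$ ($B_i=1$ is a "success", $B_i=0$ a "failure"). For a positive integer $x$, $U_p(x)=\inf\{k\in\mathbb{N}:\sum_{i=1}^k(1-B_i)=x\}-x$, i.e. the number of successes before the $x$-th failure. *)

theory Defs
  imports "HOL-Probability.Probability"
begin

text \<open>Cookie environment p: p i is the success probability of the i-th Bernoulli
  variable, i = 1, 2, ... (the value p 0 is irrelevant).  The sample space is
  nat => bool with the product of Bernoulli laws; omega i = True means B_i = 1 (success).\<close>

definition cookie_space :: "(nat \<Rightarrow> real) \<Rightarrow> (nat \<Rightarrow> bool) measure" where
  "cookie_space p = (\<Pi>\<^sub>M i\<in>UNIV. measure_pmf (bernoulli_pmf (p i)))"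

definition U :: "nat \<Rightarrow> (nat \<Rightarrow> bool) \<Rightarrow> nat" where
  "U x \<omega> = (LEAST k. card {i \<in> {1..k}. \<not> \<omega> i} = x) - x"

definition pbar :: "(nat \<Rightarrow> real) \<Rightarrow> nat \<Rightarrow> real" where
  "pbar p n = (1 / real n) * (\<Sum>i=1..n. p i)"

definition Avg :: "(nat \<Rightarrow> real) \<Rightarrow> nat \<Rightarrow> real" where
  "Avg p n = (1 / real n) * (\<Sum>i=1..n. p i * (1 - p i))"

end

theory Submission
  imports Defs
begin


locale cookie =
  fixes p :: "nat \<Rightarrow> real"
  assumes p01: "\<And>i. 0 \<le> p i \<and> p i \<le> 1"
begin

abbreviation MM where "MM \<equiv> cookie_space p"

lemma sp_eq: "space MM = UNIV"
  by (simp add: cookie_space_def space_PiM)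

lemma prob: "prob_space MM"
  unfolding cookie_space_def by (intro prob_space_PiM) (simp add: prob_space_measure_pmf)

lemma coord_meas[measurable]: "(\<lambda>\<omega>. \<omega> i) \<in> measurable MM (count_space UNIV)"
proof -
  have "(\<lambda>\<omega>. \<omega> i) \<in> measurable MM (measure_pmf (bernoulli_pmf (p i)))"
    unfolding cookie_space_def by (rule measurable_component_singleton) simp
  then show ?thesis by (simp add: measurable_def)
qed

lemma coord_rv: "(\<lambda>\<omega>. \<omega> i) \<in> measurable MM (measure_pmf (bernoulli_pmf (p i)))"
  unfolding cookie_space_def by (rule measurable_component_singleton) simp

lemma indep_coords: "prob_space.indep_vars MM (\<lambda>i. measure_pmf (bernoulli_pmf (p i))) (\<lambda>i \<omega>. \<omega> i) UNIV"
proof -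
  interpret prob_space MM by (rule prob)
  have rv: "\<And>i. random_variable (measure_pmf (bernoulli_pmf (p i))) (\<lambda>\<omega>. \<omega> i)"
    unfolding cookie_space_def by (rule measurable_component_singleton) simp
  have c: "\<And>i. distr MM (measure_pmf (bernoulli_pmf (p i))) (\<lambda>\<omega>. \<omega> i) = measure_pmf (bernoulli_pmf (p i))"
    unfolding cookie_space_def by (rule distr_PiM_component) (auto simp: prob_space_measure_pmf)
  have d: "distr MM MM (\<lambda>x. \<lambda>i\<in>UNIV. x i) = MM"
    by (simp add: restrict_UNIV)
  have eq: "distr MM (\<Pi>\<^sub>M i\<in>UNIV. measure_pmf (bernoulli_pmf (p i))) (\<lambda>x. \<lambda>i\<in>UNIV. x i)
     = (\<Pi>\<^sub>M i\<in>UNIV. distr MM (measure_pmf (bernoulli_pmf (p i))) (\<lambda>\<omega>. \<omega> i))"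
    by (simp only: c) (simp add: d cookie_space_def[symmetric])
  show ?thesis
    using eq by (subst indep_vars_iff_distr_eq_PiM) (auto simp: rv)
qed

lemma comp_int:
  fixes h :: "bool \<Rightarrow> real"
  shows "(\<integral>\<omega>. h (\<omega> i) \<partial>MM) = h True * p i + h False * (1 - p i)"
proof -
  have c: "distr MM (measure_pmf (bernoulli_pmf (p i))) (\<lambda>\<omega>. \<omega> i) = measure_pmf (bernoulli_pmf (p i))"
    unfolding cookie_space_def by (rule distr_PiM_component) (auto simp: prob_space_measure_pmf)
  have "(\<integral>\<omega>. h (\<omega> i) \<partial>MM) = (\<integral>b. h b \<partial>distr MM (measure_pmf (bernoulli_pmf (p i))) (\<lambda>\<omega>. \<omega> i))"
    by (subst integral_distr[OF coord_rv]) auto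
  also have "\<dots> = h True * p i + h False * (1 - p i)"
    using p01[of i] by (simp add: c)
  finally show ?thesis .
qed

lemma comp_integrable:
  fixes h :: "bool \<Rightarrow> real"
  shows "integrable MM (\<lambda>\<omega>. h (\<omega> i))"
proof -
  interpret prob_space MM by (rule prob)
  have hb: "\<And>b. \<bar>h b\<bar> \<le> \<bar>h True\<bar> + \<bar>h False\<bar>" by (case_tac b) auto
  have m: "(\<lambda>\<omega>. h (\<omega> i)) \<in> borel_measurable MM"
    by (rule measurable_compose[OF coord_rv]) simp
  show ?thesis
    by (rule integrable_const_bound[where B="\<bar>h True\<bar> + \<bar>h False\<bar>"]) (auto intro!: AE_I2 hb m)
qed

lemma indep_prefix:
  fixes g :: "(nat\<Rightarrow>bool) \<Rightarrow> real" and h :: "bool \<Rightarrow> real"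
  assumes gm: "g \<in> borel_measurable MM" and gi: "integrable MM g"
    and dep: "\<And>\<omega> \<omega>'. (\<And>j. j < i \<Longrightarrow> \<omega> j = \<omega>' j) \<Longrightarrow> g \<omega> = g \<omega>'"
  shows "(\<integral>\<omega>. g \<omega> * h (\<omega> i) \<partial>MM) = (\<integral>\<omega>. g \<omega> \<partial>MM) * (h True * p i + h False * (1 - p i))"
proof -
  interpret prob_space MM by (rule prob)
  define M' where "M' = (\<lambda>i. measure_pmf (bernoulli_pmf (p i)))"
  have iv: "indep_var (PiM {..<i} M') (\<lambda>\<omega>. restrict (\<lambda>j. \<omega> j) {..<i}) (PiM {i} M') (\<lambda>\<omega>. restrict (\<lambda>j. \<omega> j) {i})"
    by (rule indep_var_restrict[OF indep_coords[folded M'_def]]) auto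
  define g' where "g' y = g (\<lambda>j. if j < i then y j else False)" for y :: "nat \<Rightarrow> bool"
  have emb: "(\<lambda>y. (\<lambda>j. if j < i then y j else False)) \<in> measurable (PiM {..<i} M') MM"
    unfolding cookie_space_def M'_def[symmetric]
  proof (rule measurable_PiM_single')
    fix j :: nat
    show "(\<lambda>y. if j < i then y j else False) \<in> measurable (PiM {..<i} M') (M' j)"
    proof (cases "j < i")
      case True then show ?thesis by (simp add: measurable_component_singleton)
    next
      case False then show ?thesis by (simp add: M'_def)
    qed
  qed (auto simp: M'_def space_PiM)
  have g'm: "g' \<in> borel_measurable (PiM {..<i} M')"
    unfolding g'_def by (rule measurable_compose[OF emb gm])
  have h'm: "(\<lambda>y. h (y i)) \<in> borel_measurable (PiM {i} M')"
    by (rule measurable_compose[OF measurable_component_singleton]) (auto simp: M'_def)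
  have iv2: "indep_var borel (g' \<circ> (\<lambda>\<omega>. restrict (\<lambda>j. \<omega> j) {..<i})) borel ((\<lambda>y. h (y i)) \<circ> (\<lambda>\<omega>. restrict (\<lambda>j. \<omega> j) {i}))"
    by (rule indep_var_compose[OF iv g'm h'm])
  have e1: "g' \<circ> (\<lambda>\<omega>. restrict (\<lambda>j. \<omega> j) {..<i}) = g"
    by (rule ext) (auto simp: g'_def intro!: dep)
  have e2: "(\<lambda>y. h (y i)) \<circ> (\<lambda>\<omega>. restrict (\<lambda>j. \<omega> j) {i}) = (\<lambda>\<omega>. h (\<omega> i))"
    by (rule ext) simp
  have "(\<integral>\<omega>. g \<omega> * h (\<omega> i) \<partial>MM) = (\<integral>\<omega>. g \<omega> \<partial>MM) * (\<integral>\<omega>. h (\<omega> i) \<partial>MM)"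
    by (rule indep_var_lebesgue_integral[OF iv2[unfolded e1 e2] gi comp_integrable])
  then show ?thesis by (simp add: comp_int)
qed

end


definition Nf :: "nat \<Rightarrow> (nat \<Rightarrow> bool) \<Rightarrow> nat" where
  "Nf k \<omega> = card {i\<in>{1..k}. \<not> \<omega> i}"

definition fl :: "(nat \<Rightarrow> bool) \<Rightarrow> nat \<Rightarrow> real" where
  "fl \<omega> i = (if \<omega> i then 0 else 1)"

lemma Nf_0[simp]: "Nf 0 \<omega> = 0"
  by (simp add: Nf_def)

lemma Nf_Suc: "Nf (Suc k) \<omega> = Nf k \<omega> + (if \<omega> (Suc k) then 0 else 1)"
proof -
  have "{i\<in>{1..Suc k}. \<not> \<omega> i} = {i\<in>{1..k}. \<not> \<omega> i} \<union> (if \<omega> (Suc k) then {} else {Suc k})"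
    by (auto simp: le_Suc_eq)
  then show ?thesis by (auto simp: Nf_def)
qed

lemma Nf_real: "real (Nf k \<omega>) = (\<Sum>i=1..k. fl \<omega> i)"
  by (induction k) (auto simp: Nf_Suc fl_def)

lemma Nf_mono: "k \<le> l \<Longrightarrow> Nf k \<omega> \<le> Nf l \<omega>"
  unfolding Nf_def by (rule card_mono) auto

lemma Nf_le: "Nf k \<omega> \<le> k"
proof -
  have "Nf k \<omega> \<le> card {1..k}" unfolding Nf_def by (rule card_mono) auto
  then show ?thesis by simp
qed

lemma Nf_dep: "(\<And>j. j < i \<Longrightarrow> \<omega> j = \<omega>' j) \<Longrightarrow> k < i \<Longrightarrow> Nf k \<omega> = Nf k \<omega>'"
  unfolding Nf_def by (intro arg_cong[where f=card]) auto

lemma Nf_ivt: "x \<le> Nf k \<omega> \<Longrightarrow> \<exists>k'\<le>k. Nf k' \<omega> = x"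
proof (induction k)
  case 0 then show ?case by simp
next
  case (Suc k)
  show ?case
  proof (cases "x \<le> Nf k \<omega>")
    case True then show ?thesis using Suc.IH by (meson le_Suc_eq)
  next
    case False then show ?thesis using Suc.prems by (intro exI[of _ "Suc k"]) (auto simp: Nf_Suc split: if_splits)
  qed
qed

definition ind :: "nat \<Rightarrow> nat \<Rightarrow> (nat \<Rightarrow> bool) \<Rightarrow> bool" where
  "ind x i \<omega> = (Nf (i - 1) \<omega> < x)"

lemma ind_anti: "i \<le> j \<Longrightarrow> ind x j \<omega> \<Longrightarrow> ind x i \<omega>"
  unfolding ind_def using Nf_mono[of "i - 1" "j - 1" \<omega>] by (meson diff_le_mono le_less_trans)

lemma init_seg: "\<exists>c\<le>n. \<forall>i\<in>{1..n}. ind x i \<omega> \<longleftrightarrow> i \<le> c"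
proof (induction n)
  case 0 then show ?case by simp
next
  case (Suc n)
  then obtain c where c: "c \<le> n" "\<forall>i\<in>{1..n}. ind x i \<omega> \<longleftrightarrow> i \<le> c" by blast
  show ?case
  proof (cases "ind x (Suc n) \<omega>")
    case True
    then show ?thesis by (intro exI[of _ "Suc n"]) (auto intro: ind_anti)
  next
    case False
    then show ?thesis using c by (intro exI[of _ c]) (auto simp: le_Suc_eq)
  qed
qed

lemma sum_init: fixes n c :: nat shows "(\<Sum>i=1..n. (if i \<le> c then f i else 0)) = (\<Sum>i=1..min n c. (f i :: real))"
proof -
  have "(\<Sum>i=1..n. (if i \<le> c then f i else 0)) = (\<Sum>i\<in>{1..n} \<inter> {i. i \<le> c}. f i)"
    by (subst sum.inter_restrict) auto
  also have "{1..n} \<inter> {i. i \<le> c} = {1..min n c}" by auto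
  finally show ?thesis .
qed

lemma sum_ind: 
  assumes "c \<le> n" "\<forall>i\<in>{1..n}. ind x i \<omega> \<longleftrightarrow> i \<le> c"
  shows "(\<Sum>i=1..n. (if ind x i \<omega> then f i else 0)) = (\<Sum>i=1..c. (f i :: real))"
proof -
  have "(\<Sum>i=1..n. (if ind x i \<omega> then f i else 0)) = (\<Sum>i=1..n. (if i \<le> c then f i else 0))"
    using assms by (intro sum.cong) auto
  then show ?thesis using sum_init[where n=n and c=c and f=f] assms(1) by (simp add: min_absorb2)
qed

lemma sum_min_fl: "(\<Sum>i=1..n. (if ind x i \<omega> then fl \<omega> i else 0)) = real (min (Nf n \<omega>) x)"
proof (induction n)
  case 0 then show ?case by simp
next
  case (Suc n)
  have "(\<Sum>i=1..Suc n. (if ind x i \<omega> then fl \<omega> i else 0)) =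
     real (min (Nf n \<omega>) x) + (if ind x (Suc n) \<omega> then fl \<omega> (Suc n) else 0)"
    using Suc by simp
  also have "\<dots> = real (min (Nf (Suc n) \<omega>) x)"
    by (auto simp: ind_def fl_def Nf_Suc)
  finally show ?case .
qed



definition Tt :: "nat \<Rightarrow> (nat \<Rightarrow> bool) \<Rightarrow> nat" where
  "Tt x \<omega> = (LEAST k. Nf k \<omega> = x)"

lemma reach_lt: assumes "Nf k0 \<omega> = x" shows "Nf k \<omega> < x \<longleftrightarrow> k < Tt x \<omega>"
proof -
  have T: "Nf (Tt x \<omega>) \<omega> = x" unfolding Tt_def by (rule LeastI[of _ k0]) (rule assms)
  show ?thesis
  proof
    assume "Nf k \<omega> < x"
    then show "k < Tt x \<omega>" using T Nf_mono[of "Tt x \<omega>" k \<omega>] by (metis not_le order.strict_trans2)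
  next
    assume k: "k < Tt x \<omega>"
    show "Nf k \<omega> < x"
    proof (rule ccontr)
      assume "\<not> Nf k \<omega> < x"
      then obtain k' where "k' \<le> k" "Nf k' \<omega> = x" using Nf_ivt[of x k \<omega>] by auto
      then have "Tt x \<omega> \<le> k'" unfolding Tt_def by (rule_tac Least_le) simp
      then show False using k \<open>k' \<le> k\<close> by simp
    qed
  qed
qed

lemma reach_T: "Nf k0 \<omega> = x \<Longrightarrow> Nf (Tt x \<omega>) \<omega> = x"
  unfolding Tt_def by (rule LeastI)

lemma reach_ind: "Nf k0 \<omega> = x \<Longrightarrow> 1 \<le> i \<Longrightarrow> ind x i \<omega> \<longleftrightarrow> i \<le> Tt x \<omega>"
  unfolding ind_def by (subst reach_lt) auto

lemma Tt_ge: "Nf k0 \<omega> = x \<Longrightarrow> x \<le> Tt x \<omega>"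
  using reach_T[of k0 \<omega> x] Nf_le[of "Tt x \<omega>" \<omega>] by simp

lemma noreach_ind: "\<not> (\<exists>k. Nf k \<omega> = x) \<Longrightarrow> ind x i \<omega>"
  unfolding ind_def using Nf_ivt[of x "i - 1" \<omega>] by (meson not_le)

locale cookie2 = cookie p for p :: "nat \<Rightarrow> real" +
  fixes A K :: real
  assumes rate: "\<And>n. n \<ge> 1 \<Longrightarrow> \<bar>pbar p n - 1/2\<bar> \<le> K / real n \<and> \<bar>Avg p n - A\<bar> \<le> K / real n"
    and A_pos: "A > 0"
begin

lemma K_nonneg: "K \<ge> 0"
  using rate[of 1] by (smt (verit) div_by_1 of_nat_1 order_refl)

definition ee :: "nat \<Rightarrow> real" where "ee c = (\<Sum>i=1..c. ((1 - p i) - 1/2))"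
definition gg :: "nat \<Rightarrow> real" where "gg c = (\<Sum>i=1..c. (p i * (1 - p i) - A))"

lemma ee_bound: "\<bar>ee c\<bar> \<le> K"
proof (cases "c = 0")
  case True then show ?thesis by (simp add: ee_def K_nonneg)
next
  case False
  then have c: "real c > 0" by simp
  have "ee c = - real c * (pbar p c - 1/2)"
    using c by (simp add: ee_def pbar_def sum_subtractf algebra_simps)
  then have "\<bar>ee c\<bar> = real c * \<bar>pbar p c - 1/2\<bar>" by (simp add: abs_mult)
  also have "\<dots> \<le> real c * (K / real c)"
    using rate[of c] False c by (intro mult_left_mono) auto
  finally show ?thesis using c by simp
qed

lemma gg_bound: "\<bar>gg c\<bar> \<le> K"
proof (cases "c = 0")
  case True then show ?thesis by (simp add: gg_def K_nonneg)
next
  case False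
  then have c: "real c > 0" by simp
  have "gg c = real c * (Avg p c - A)"
    using c by (simp add: gg_def Avg_def sum_subtractf sum.distrib algebra_simps)
  then have "\<bar>gg c\<bar> = real c * \<bar>Avg p c - A\<bar>" by (simp add: abs_mult)
  also have "\<dots> \<le> real c * (K / real c)"
    using rate[of c] False c by (intro mult_left_mono) auto
  finally show ?thesis using c by simp
qed

definition tau :: "nat \<Rightarrow> nat \<Rightarrow> (nat \<Rightarrow> bool) \<Rightarrow> real" where
  "tau x n \<omega> = (\<Sum>i=1..n. (if ind x i \<omega> then 1 else 0))"
definition Dn :: "nat \<Rightarrow> nat \<Rightarrow> (nat \<Rightarrow> bool) \<Rightarrow> real" where
  "Dn x n \<omega> = (\<Sum>i=1..n. (if ind x i \<omega> then fl \<omega> i - (1 - p i) else 0))"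
definition PQ :: "nat \<Rightarrow> nat \<Rightarrow> (nat \<Rightarrow> bool) \<Rightarrow> real" where
  "PQ x n \<omega> = (\<Sum>i=1..n. (if ind x i \<omega> then p i * (1 - p i) else 0))"

lemma pointwise:
  assumes "c \<le> n" "\<forall>i\<in>{1..n}. ind x i \<omega> \<longleftrightarrow> i \<le> c"
  shows "tau x n \<omega> = real c"
    and "Dn x n \<omega> = real (min (Nf n \<omega>) x) - real c / 2 - ee c"
    and "PQ x n \<omega> = A * real c + gg c"
proof -
  show t: "tau x n \<omega> = real c"
    unfolding tau_def by (subst sum_ind[OF assms]) simp
  have "Dn x n \<omega> = (\<Sum>i=1..n. (if ind x i \<omega> then fl \<omega> i else 0)) - (\<Sum>i=1..n. (if ind x i \<omega> then 1 - p i else 0))"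
    unfolding Dn_def sum_subtractf[symmetric] by (intro sum.cong) auto
  also have "\<dots> = real (min (Nf n \<omega>) x) - (\<Sum>i=1..c. (1 - p i))"
    by (simp only: sum_min_fl sum_ind[OF assms, where f="\<lambda>i. 1 - p i"])
  also have "(\<Sum>i=1..c. (1 - p i)) = real c / 2 + ee c"
    by (simp add: ee_def sum_subtractf)
  finally show "Dn x n \<omega> = real (min (Nf n \<omega>) x) - real c / 2 - ee c" by simp
  have "PQ x n \<omega> = (\<Sum>i=1..c. p i * (1 - p i))"
    unfolding PQ_def by (rule sum_ind[OF assms])
  also have "\<dots> = A * real c + gg c"
    by (simp add: gg_def sum_subtractf)
  finally show "PQ x n \<omega> = A * real c + gg c" .
qed

end


context cookie
begin

lemma fl_meas[measurable]: "(\<lambda>\<omega>. fl \<omega> i) \<in> borel_measurable MM"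
  unfolding fl_def by measurable

lemma ind_meas[measurable]: "Measurable.pred MM (ind x i)"
proof -
  have eq: "ind x i = (\<lambda>\<omega>. (\<Sum>j=1..i-1. fl \<omega> j) < real x)"
    unfolding ind_def Nf_real[symmetric] by simp
  show ?thesis unfolding eq by measurable
qed

lemma Nf_eq_meas[measurable]: "Measurable.pred MM (\<lambda>\<omega>. Nf k \<omega> = x)"
proof -
  have eq: "(\<lambda>\<omega>. Nf k \<omega> = x) = (\<lambda>\<omega>. (\<Sum>j=1..k. fl \<omega> j) = real x)"
    unfolding Nf_real[symmetric] by simp
  show ?thesis unfolding eq by measurable
qed

lemma Tt_meas[measurable]: "Tt x \<in> measurable MM (count_space UNIV)"
  unfolding Tt_def by measurable

lemma ind_dep: "(\<And>j. j < i \<Longrightarrow> \<omega> j = \<omega>' j) \<Longrightarrow> ind x i \<omega> = ind x i \<omega>'"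
  unfolding ind_def
  by (cases i) (auto simp: Nf_dep[of i \<omega> \<omega>'])

lemma bnd_int: fixes f :: "(nat \<Rightarrow> bool) \<Rightarrow> real" and B :: real shows "f \<in> borel_measurable MM \<Longrightarrow> (\<And>\<omega>. \<bar>f \<omega>\<bar> \<le> B) \<Longrightarrow> integrable MM f"
proof -
  interpret prob_space MM by (rule prob)
  show "f \<in> borel_measurable MM \<Longrightarrow> (\<And>\<omega>. \<bar>f \<omega>\<bar> \<le> B) \<Longrightarrow> integrable MM f"
    by (rule integrable_const_bound[where B=B]) auto
qed

end

context cookie2
begin

lemma tau_meas[measurable]: "tau x n \<in> borel_measurable MM"
  unfolding tau_def by measurable
lemma Dn_meas[measurable]: "Dn x n \<in> borel_measurable MM"
  unfolding Dn_def by measurable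
lemma PQ_meas[measurable]: "PQ x n \<in> borel_measurable MM"
  unfolding PQ_def by measurable

lemma Dn_bound: "\<bar>Dn x n \<omega>\<bar> \<le> real n"
proof -
  have "\<bar>Dn x n \<omega>\<bar> \<le> (\<Sum>i=1..n. \<bar>if ind x i \<omega> then fl \<omega> i - (1 - p i) else 0\<bar>)"
    unfolding Dn_def by (rule sum_abs)
  also have "\<dots> \<le> (\<Sum>i=1..n. 1)"
    using p01 by (intro sum_mono) (auto simp: fl_def)
  finally show ?thesis by simp
qed

lemma tau_bound: "\<bar>tau x n \<omega>\<bar> \<le> real n"
proof -
  have "\<bar>tau x n \<omega>\<bar> \<le> (\<Sum>i=1..n. \<bar>if ind x i \<omega> then 1 else 0 :: real\<bar>)"
    unfolding tau_def by (rule sum_abs)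
  also have "\<dots> \<le> (\<Sum>i=1..n. 1)"
    by (intro sum_mono) auto
  finally show ?thesis by simp
qed

lemma PQ_bound: "\<bar>PQ x n \<omega>\<bar> \<le> real n"
proof -
  have "\<bar>PQ x n \<omega>\<bar> \<le> (\<Sum>i=1..n. \<bar>if ind x i \<omega> then p i * (1 - p i) else 0\<bar>)"
    unfolding PQ_def by (rule sum_abs)
  also have "\<dots> \<le> (\<Sum>i=1..n. 1)"
    using p01 by (intro sum_mono) (auto simp: abs_mult mult_le_one)
  finally show ?thesis by simp
qed

lemma Dn_int: "integrable MM (Dn x n)"
  by (rule bnd_int[OF Dn_meas Dn_bound])
lemma tau_int: "integrable MM (tau x n)"
  by (rule bnd_int[OF tau_meas tau_bound])
lemma PQ_int: "integrable MM (PQ x n)"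
  by (rule bnd_int[OF PQ_meas PQ_bound])

lemma Dn_dep: "(\<And>j. j < Suc n \<Longrightarrow> \<omega> j = \<omega>' j) \<Longrightarrow> Dn x n \<omega> = Dn x n \<omega>'"
  unfolding Dn_def
proof (intro sum.cong refl)
  fix i assume h: "\<And>j. j < Suc n \<Longrightarrow> \<omega> j = \<omega>' j" and i: "i \<in> {1..n}"
  have "ind x i \<omega> = ind x i \<omega>'" by (rule ind_dep) (use h i in auto)
  moreover have "fl \<omega> i = fl \<omega>' i" using h i by (auto simp: fl_def)
  ultimately show "(if ind x i \<omega> then fl \<omega> i - (1 - p i) else 0) = (if ind x i \<omega>' then fl \<omega>' i - (1 - p i) else 0)"
    by simp
qed

lemma Dn_Suc: "Dn x (Suc n) \<omega> = Dn x n \<omega> + (if ind x (Suc n) \<omega> then 1 else 0) * ((if \<omega> (Suc n) then 0 else 1) - (1 - p (Suc n)))"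
  by (simp add: Dn_def fl_def)

lemma PQ_Suc: "PQ x (Suc n) \<omega> = PQ x n \<omega> + (if ind x (Suc n) \<omega> then 1 else 0) * (p (Suc n) * (1 - p (Suc n)))"
  by (simp add: PQ_def)

lemma ind_int: "integrable MM (\<lambda>\<omega>. if ind x i \<omega> then 1 else 0 :: real)"
  by (rule bnd_int[where B=1]) auto

lemma E1: "(\<integral>\<omega>. Dn x n \<omega> \<partial>MM) = 0"
proof (induction n)
  case 0 then show ?case by (simp add: Dn_def)
next
  case (Suc n)
  let ?g = "\<lambda>\<omega>. if ind x (Suc n) \<omega> then 1 else 0 :: real"
  let ?h = "\<lambda>b. (if b then 0 else 1) - (1 - p (Suc n)) :: real"
  have dep: "?g \<omega> = ?g \<omega>'" if "\<And>j. j < Suc n \<Longrightarrow> \<omega> j = \<omega>' j" for \<omega> \<omega>'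
  proof -
    have "ind x (Suc n) \<omega> = ind x (Suc n) \<omega>'" by (rule ind_dep) (rule that)
    then show ?thesis by simp
  qed
  have c: "(\<integral>\<omega>. ?g \<omega> * ?h (\<omega> (Suc n)) \<partial>MM) = 0"
    by (subst indep_prefix[OF _ ind_int dep]) (auto simp: algebra_simps)
  have "(\<integral>\<omega>. Dn x (Suc n) \<omega> \<partial>MM) = (\<integral>\<omega>. Dn x n \<omega> \<partial>MM) + (\<integral>\<omega>. ?g \<omega> * ?h (\<omega> (Suc n)) \<partial>MM)"
    unfolding Dn_Suc
    apply (rule Bochner_Integration.integral_add[OF Dn_int])
    apply (rule bnd_int[where B=1])
    subgoal by measurable
    subgoal using p01[of "Suc n"] by auto
    done
  then show ?case using Suc c by simp
qed

lemma E2: "(\<integral>\<omega>. (Dn x n \<omega>)^2 \<partial>MM) = (\<integral>\<omega>. PQ x n \<omega> \<partial>MM)"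
proof (induction n)
  case 0 then show ?case by (simp add: Dn_def PQ_def)
next
  case (Suc n)
  let ?g = "\<lambda>\<omega>. if ind x (Suc n) \<omega> then 1 else 0 :: real"
  let ?h = "\<lambda>b. (if b then 0 else 1) - (1 - p (Suc n)) :: real"
  let ?h2 = "\<lambda>b. ((if b then 0 else 1) - (1 - p (Suc n)))^2 :: real"
  have dep: "?g \<omega> = ?g \<omega>'" if "\<And>j. j < Suc n \<Longrightarrow> \<omega> j = \<omega>' j" for \<omega> \<omega>'
  proof -
    have "ind x (Suc n) \<omega> = ind x (Suc n) \<omega>'" by (rule ind_dep) (rule that)
    then show ?thesis by simp
  qed
  have dep2: "2 * Dn x n \<omega> * ?g \<omega> = 2 * Dn x n \<omega>' * ?g \<omega>'" if "\<And>j. j < Suc n \<Longrightarrow> \<omega> j = \<omega>' j" for \<omega> \<omega>'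
    using dep[OF that] Dn_dep[OF that] by simp
  have int2: "integrable MM (\<lambda>\<omega>. 2 * Dn x n \<omega> * ?g \<omega>)"
    by (rule bnd_int[where B="2 * real n"]) (auto simp: Dn_bound abs_mult)
  have c1: "(\<integral>\<omega>. (2 * Dn x n \<omega> * ?g \<omega>) * ?h (\<omega> (Suc n)) \<partial>MM) = 0"
    by (subst indep_prefix[OF _ int2 dep2]) (auto simp: algebra_simps)
  have c2: "(\<integral>\<omega>. ?g \<omega> * ?h2 (\<omega> (Suc n)) \<partial>MM) = (\<integral>\<omega>. ?g \<omega> \<partial>MM) * (p (Suc n) * (1 - p (Suc n)))"
    by (subst indep_prefix[OF _ ind_int dep]) (auto simp: algebra_simps power2_eq_square)
  have pb: "\<bar>p (Suc n)\<bar> \<le> 1" "\<bar>p (Suc n) - 1\<bar> \<le> 1" using p01[of "Suc n"] by auto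
  have i1: "integrable MM (\<lambda>\<omega>. (2 * Dn x n \<omega> * ?g \<omega>) * ?h (\<omega> (Suc n)))"
    apply (rule bnd_int[where B="2 * real n"])
    subgoal by measurable
    subgoal for \<omega> using Dn_bound[of x n \<omega>] pb p01[of "Suc n"]
      by (auto simp: abs_mult intro: mult_le_one mult_le_one[of "\<bar>Dn x n \<omega>\<bar> / real n" ] 
        order.trans[OF mult_right_le_one_le[of "\<bar>Dn x n \<omega>\<bar>"]])
    done
  have i2: "integrable MM (\<lambda>\<omega>. ?g \<omega> * ?h2 (\<omega> (Suc n)))"
    apply (rule bnd_int[where B="1"])
    subgoal by measurable
    subgoal for \<omega>
    proof -
      have a: "(p (Suc n) - 1) * (p (Suc n) - 1) \<le> 1" "p (Suc n) * p (Suc n) \<le> 1"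
        using mult_le_one[OF pb(2) abs_ge_zero pb(2)] mult_le_one[OF pb(1) abs_ge_zero pb(1)]
        by (simp_all add: abs_mult_self_eq flip: abs_mult)
      then show ?thesis using pb by (auto simp: abs_mult power2_eq_square)
    qed
    done
  have i0: "integrable MM (\<lambda>\<omega>. (Dn x n \<omega>)^2)"
    apply (rule bnd_int[where B="real n ^ 2"])
    subgoal by measurable
    subgoal for \<omega> using Dn_bound[of x n \<omega>] abs_le_square_iff[of "Dn x n \<omega>" "real n"] by simp
    done
  have i3: "integrable MM (\<lambda>\<omega>. ?g \<omega> * (p (Suc n) * (1 - p (Suc n))))"
    by (intro integrable_mult_left ind_int)
  have sq: "(Dn x (Suc n) \<omega>)^2 = (Dn x n \<omega>)^2 + (2 * Dn x n \<omega> * ?g \<omega>) * ?h (\<omega> (Suc n)) + ?g \<omega> * ?h2 (\<omega> (Suc n))" for \<omega>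
    unfolding Dn_Suc by (simp add: power2_eq_square algebra_simps)
  have "(\<integral>\<omega>. (Dn x (Suc n) \<omega>)^2 \<partial>MM) = (\<integral>\<omega>. (Dn x n \<omega>)^2 \<partial>MM)
       + (\<integral>\<omega>. (2 * Dn x n \<omega> * ?g \<omega>) * ?h (\<omega> (Suc n)) \<partial>MM) + (\<integral>\<omega>. ?g \<omega> * ?h2 (\<omega> (Suc n)) \<partial>MM)"
    unfolding sq using i0 i1 i2 by simp
  also have "\<dots> = (\<integral>\<omega>. PQ x n \<omega> \<partial>MM) + (\<integral>\<omega>. ?g \<omega> \<partial>MM) * (p (Suc n) * (1 - p (Suc n)))"
    using Suc c1 c2 by simp
  also have "\<dots> = (\<integral>\<omega>. PQ x (Suc n) \<omega> \<partial>MM)"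
    unfolding PQ_Suc using PQ_int i3 by simp
  finally show ?case .
qed

end


sublocale cookie \<subseteq> P: prob_space MM by (rule prob)

lemma sq_sum: "((a::real) + b)^2 \<le> 2*a^2 + 2*b^2"
proof -
  have "0 \<le> (a - b)^2" by simp
  then show ?thesis by (simp add: power2_eq_square algebra_simps)
qed

locale cookie3 = cookie2 +
  fixes x :: nat
  assumes x1: "x \<ge> 1"
begin

lemma pw:
  obtains c where "c \<le> n" "tau x n \<omega> = real c" "Dn x n \<omega> = real (min (Nf n \<omega>) x) - real c/2 - ee c"
    "PQ x n \<omega> = A*real c + gg c"
proof -
  obtain c where c: "c \<le> n" "\<forall>i\<in>{1..n}. ind x i \<omega> \<longleftrightarrow> i \<le> c" using init_seg by blast
  show ?thesis by (rule that[OF c(1) pointwise[OF c]])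
qed

lemma tau_le: "tau x n \<omega> \<le> 2*real x - 2*Dn x n \<omega> + 2*K"
proof -
  obtain c where c: "c \<le> n" "tau x n \<omega> = real c" "Dn x n \<omega> = real (min (Nf n \<omega>) x) - real c/2 - ee c" by (rule pw)
  have "real (min (Nf n \<omega>) x) \<le> real x" by simp
  then show ?thesis using c ee_bound[of c] by linarith
qed

lemma tau_nn: "0 \<le> tau x n \<omega>"
  unfolding tau_def by (intro sum_nonneg) auto

lemma PQ_le: "PQ x n \<omega> \<le> A * tau x n \<omega> + K"
proof -
  obtain c where c: "c \<le> n" "tau x n \<omega> = real c" "PQ x n \<omega> = A*real c + gg c" by (rule pw)
  then have "PQ x n \<omega> = A * tau x n \<omega> + gg c" by simp
  then show ?thesis using gg_bound[of c] by linarith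
qed

lemma tau_sq: "(tau x n \<omega>)^2 \<le> 2*(2*real x+2*K)^2 + 8*(Dn x n \<omega>)^2"
proof -
  obtain c where c: "c \<le> n" "tau x n \<omega> = real c" "Dn x n \<omega> = real (min (Nf n \<omega>) x) - real c/2 - ee c" by (rule pw)
  have "real (min (Nf n \<omega>) x) \<le> real x" by simp
  then have t: "tau x n \<omega> \<le> (2*real x+2*K) + 2*\<bar>Dn x n \<omega>\<bar>" using c ee_bound[of c] by linarith
  have "(tau x n \<omega>)^2 \<le> ((2*real x+2*K) + 2*\<bar>Dn x n \<omega>\<bar>)^2"
    by (rule power_mono[OF t tau_nn])
  also have "\<dots> \<le> 2*(2*real x+2*K)^2 + 8*(Dn x n \<omega>)^2"
    using sq_sum[of "2*real x+2*K" "2*\<bar>Dn x n \<omega>\<bar>"] by (simp add: power_mult_distrib)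
  finally show ?thesis .
qed

lemma int_tau: "(\<integral>\<omega>. tau x n \<omega> \<partial>MM) \<le> 2*real x + 2*K"
proof -
  have "(\<integral>\<omega>. tau x n \<omega> \<partial>MM) \<le> (\<integral>\<omega>. 2*real x - 2*Dn x n \<omega> + 2*K \<partial>MM)"
    by (intro integral_mono tau_int tau_le Bochner_Integration.integrable_add
        Bochner_Integration.integrable_diff integrable_mult_right Dn_int P.integrable_const)
  also have "\<dots> = 2*real x + 2*K"
    using Dn_int E1 by (simp add: P.prob_space)
  finally show ?thesis .
qed

lemma Dn2_int: "integrable MM (\<lambda>\<omega>. (Dn x n \<omega>)^2)"
  apply (rule bnd_int[where B="real n ^ 2"])
  subgoal by measurable
  subgoal for \<omega> using Dn_bound[of x n \<omega>] abs_le_square_iff[of "Dn x n \<omega>" "real n"] by simp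
  done

lemma int_Dn2: "(\<integral>\<omega>. (Dn x n \<omega>)^2 \<partial>MM) \<le> A*(2*real x + 2*K) + K"
proof -
  have "(\<integral>\<omega>. (Dn x n \<omega>)^2 \<partial>MM) = (\<integral>\<omega>. PQ x n \<omega> \<partial>MM)" by (rule E2)
  also have "\<dots> \<le> (\<integral>\<omega>. A * tau x n \<omega> + K \<partial>MM)"
    by (intro integral_mono PQ_int PQ_le Bochner_Integration.integrable_add
        integrable_mult_right tau_int P.integrable_const)
  also have "\<dots> = A * (\<integral>\<omega>. tau x n \<omega> \<partial>MM) + K"
    using tau_int by (simp add: P.prob_space)
  also have "\<dots> \<le> A*(2*real x + 2*K) + K"
    using int_tau A_pos by simp
  finally show ?thesis .
qed

definition BB where "BB = 2*(2*real x+2*K)^2 + 8*(A*(2*real x + 2*K) + K)"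

lemma tau2_int: "integrable MM (\<lambda>\<omega>. (tau x n \<omega>)^2)"
  apply (rule bnd_int[where B="real n ^ 2"])
  subgoal by measurable
  subgoal for \<omega> using tau_bound[of x n \<omega>] abs_le_square_iff[of "tau x n \<omega>" "real n"] by simp
  done

lemma int_tau2: "(\<integral>\<omega>. (tau x n \<omega>)^2 \<partial>MM) \<le> BB"
proof -
  have "(\<integral>\<omega>. (tau x n \<omega>)^2 \<partial>MM) \<le> (\<integral>\<omega>. 2*(2*real x+2*K)^2 + 8*(Dn x n \<omega>)^2 \<partial>MM)"
    by (intro integral_mono tau2_int tau_sq Bochner_Integration.integrable_add
        integrable_mult_right Dn2_int P.integrable_const)
  also have "\<dots> = 2*(2*real x+2*K)^2 + 8*(\<integral>\<omega>. (Dn x n \<omega>)^2 \<partial>MM)"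
    using Dn2_int by (simp add: P.prob_space)
  also have "\<dots> \<le> BB"
    using int_Dn2[of n] by (simp add: BB_def)
  finally show ?thesis .
qed

end


context cookie3
begin

abbreviation reach where "reach \<omega> \<equiv> (\<exists>k. Nf k \<omega> = x)"
abbreviation Tr where "Tr \<omega> \<equiv> real (Tt x \<omega>)"

lemma reach_meas[measurable]: "Measurable.pred MM (\<lambda>\<omega>. \<exists>k. Nf k \<omega> = x)"
  by measurable

lemma Tr_meas[measurable]: "(\<lambda>\<omega>. real (Tt x \<omega>)) \<in> borel_measurable MM"
  by measurable

lemma nonreach_tau: "\<not> reach \<omega> \<Longrightarrow> tau x n \<omega> = real n"
  unfolding tau_def using noreach_ind[of \<omega> x] by simp

lemma BB_nn: "0 \<le> BB"
  unfolding BB_def using A_pos K_nonneg by simp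

lemma prob_nonreach: "P.prob {\<omega>\<in>space MM. \<not> reach \<omega>} = 0"
proof -
  let ?N = "{\<omega>\<in>space MM. \<not> reach \<omega>}"
  have Ns: "?N \<in> sets MM" by measurable
  have le: "P.prob ?N \<le> BB / real n" if n: "n \<ge> 1" for n
  proof -
    have "(\<integral>\<omega>. (real n)^2 * indicator ?N \<omega> \<partial>MM) \<le> (\<integral>\<omega>. (tau x n \<omega>)^2 \<partial>MM)"
    proof (rule integral_mono)
      show "integrable MM (\<lambda>\<omega>. (real n)^2 * indicator ?N \<omega>)"
        using Ns by (intro integrable_mult_right) (simp add: P.emeasure_eq_measure)
      show "integrable MM (\<lambda>\<omega>. (tau x n \<omega>)^2)" by (rule tau2_int)
      fix \<omega> show "(real n)^2 * indicator ?N \<omega> \<le> (tau x n \<omega>)^2"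
        by (cases "reach \<omega>") (auto simp: indicator_def nonreach_tau)
    qed
    also have "\<dots> \<le> BB" by (rule int_tau2)
    finally have "(real n)^2 * P.prob ?N \<le> BB"
      using Ns by (simp add: P.emeasure_eq_measure)
    moreover have "real n * P.prob ?N \<le> (real n)^2 * P.prob ?N"
      using n by (intro mult_right_mono) (auto simp: power2_eq_square)
    ultimately have "real n * P.prob ?N \<le> BB" by linarith
    then show ?thesis using n by (simp add: field_simps)
  qed
  have "P.prob ?N \<le> 0"
    by (rule LIMSEQ_le_const[OF lim_const_over_n[of BB]]) (use le in auto)
  then show ?thesis by (simp add: antisym)
qed

lemma AE_reach: "AE \<omega> in MM. reach \<omega>"
proof -
  let ?N = "{\<omega>\<in>space MM. \<not> reach \<omega>}"
  have Ns: "?N \<in> sets MM" by measurable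
  show ?thesis
    using prob_nonreach by (subst AE_iff_measurable[OF Ns refl]) (simp add: P.emeasure_eq_measure)
qed

lemma reach_pw:
  assumes r: "reach \<omega>"
  shows "tau x n \<omega> = real (min n (Tt x \<omega>))"
    "Dn x n \<omega> = real (min (Nf n \<omega>) x) - real (min n (Tt x \<omega>))/2 - ee (min n (Tt x \<omega>))"
    "PQ x n \<omega> = A * real (min n (Tt x \<omega>)) + gg (min n (Tt x \<omega>))"
proof -
  obtain k where k: "Nf k \<omega> = x" using r by blast
  have c: "min n (Tt x \<omega>) \<le> n" "\<forall>i\<in>{1..n}. ind x i \<omega> \<longleftrightarrow> i \<le> min n (Tt x \<omega>)"
    using reach_ind[OF k] by auto
  show "tau x n \<omega> = real (min n (Tt x \<omega>))" by (rule pointwise(1)[OF c])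
  show "Dn x n \<omega> = real (min (Nf n \<omega>) x) - real (min n (Tt x \<omega>))/2 - ee (min n (Tt x \<omega>))"
    by (rule pointwise(2)[OF c])
  show "PQ x n \<omega> = A * real (min n (Tt x \<omega>)) + gg (min n (Tt x \<omega>))" by (rule pointwise(3)[OF c])
qed

lemma reach_Nf_big: "reach \<omega> \<Longrightarrow> Tt x \<omega> \<le> n \<Longrightarrow> min (Nf n \<omega>) x = x"
  using reach_T[of _ \<omega> x] Nf_mono[of "Tt x \<omega>" n \<omega>] by force

lemma reach_eventually:
  assumes r: "reach \<omega>" and n: "Tt x \<omega> \<le> n"
  shows "tau x n \<omega> = Tr \<omega>" "Dn x n \<omega> = real x - Tr \<omega> / 2 - ee (Tt x \<omega>)"
    "PQ x n \<omega> = A * Tr \<omega> + gg (Tt x \<omega>)"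
  using reach_pw[OF r, of n] reach_Nf_big[OF r n] n by (simp_all add: min_absorb2)

lemma reach_bounds:
  assumes r: "reach \<omega>"
  shows "tau x n \<omega> \<le> Tr \<omega>" "\<bar>Dn x n \<omega>\<bar> \<le> real x + Tr \<omega> / 2 + K"
    "\<bar>PQ x n \<omega>\<bar> \<le> A * Tr \<omega> + K"
proof -
  let ?c = "min n (Tt x \<omega>)"
  have c: "real ?c \<le> Tr \<omega>" by simp
  show "tau x n \<omega> \<le> Tr \<omega>" using reach_pw(1)[OF r] c by simp
  have "real (min (Nf n \<omega>) x) \<le> real x" by simp
  then show "\<bar>Dn x n \<omega>\<bar> \<le> real x + Tr \<omega> / 2 + K"
    using reach_pw(2)[OF r, of n] ee_bound[of ?c] c by (simp add: abs_le_iff) linarith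
  have "A * real ?c \<le> A * Tr \<omega>" using c A_pos by (intro mult_left_mono) auto
  moreover have "0 \<le> PQ x n \<omega>" unfolding PQ_def using p01 by (intro sum_nonneg) auto
  ultimately show "\<bar>PQ x n \<omega>\<bar> \<le> A * Tr \<omega> + K"
    using reach_pw(3)[OF r, of n] gg_bound[of ?c] by simp
qed

lemma tau_mono: "n \<le> m \<Longrightarrow> tau x n \<omega> \<le> tau x m \<omega>"
  unfolding tau_def by (rule sum_mono2) auto

lemma Tr2_int: "integrable MM (\<lambda>\<omega>. (Tr \<omega>)^2)"
proof (rule integral_monotone_convergence_nonneg)
  show "\<And>i. integrable MM (\<lambda>\<omega>. (tau x i \<omega>)^2)" by (rule tau2_int)
  show "AE \<omega> in MM. mono (\<lambda>n. (tau x n \<omega>)^2)"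
    by (intro AE_I2) (auto simp: mono_def intro!: power_mono tau_mono tau_nn)
  show "\<And>i. AE \<omega> in MM. 0 \<le> (tau x i \<omega>)^2" by simp
  show "AE \<omega> in MM. (\<lambda>n. (tau x n \<omega>)^2) \<longlonglongrightarrow> (Tr \<omega>)^2"
    using AE_reach
  proof (rule AE_mp, intro AE_I2 impI)
    fix \<omega> assume r: "reach \<omega>"
    have "eventually (\<lambda>n. (tau x n \<omega>)^2 = (Tr \<omega>)^2) sequentially"
      unfolding eventually_sequentially using reach_eventually(1)[OF r] by (intro exI[of _ "Tt x \<omega>"]) auto
    then show "(\<lambda>n. (tau x n \<omega>)^2) \<longlonglongrightarrow> (Tr \<omega>)^2"
      by (rule tendsto_eventually)
  qed
  show "(\<lambda>i. \<integral>\<omega>. (tau x i \<omega>)^2 \<partial>MM) \<longlonglongrightarrow> (SUP i. \<integral>\<omega>. (tau x i \<omega>)^2 \<partial>MM)"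
  proof (rule LIMSEQ_incseq_SUP)
    show "bdd_above (range (\<lambda>i. \<integral>\<omega>. (tau x i \<omega>)^2 \<partial>MM))"
      using int_tau2 by (auto intro!: bdd_aboveI[of _ BB])
    show "incseq (\<lambda>i. \<integral>\<omega>. (tau x i \<omega>)^2 \<partial>MM)"
      by (auto simp: incseq_def intro!: integral_mono tau2_int power_mono tau_mono tau_nn)
  qed
  show "(\<lambda>\<omega>. (Tr \<omega>)^2) \<in> borel_measurable MM" by measurable
qed

lemma Tr_int: "integrable MM Tr"
proof (rule Bochner_Integration.integrable_bound[OF Bochner_Integration.integrable_add[OF P.integrable_const[of 1] Tr2_int]])
  show "Tr \<in> borel_measurable MM" by measurable
  show "AE \<omega> in MM. norm (Tr \<omega>) \<le> norm (1 + (Tr \<omega>)^2)"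
  proof (intro AE_I2)
    fix \<omega>
    have "Tr \<omega> \<le> 1 + (Tr \<omega>)^2"
    proof (cases "Tr \<omega> \<le> 1")
      case True then show ?thesis by (smt (verit) zero_le_power2)
    next
      case False then have "Tr \<omega> \<le> Tr \<omega> * Tr \<omega>" by (intro mult_le_cancel_left1[THEN iffD2]) auto
      then show ?thesis by (simp add: power2_eq_square)
    qed
    then show "norm (Tr \<omega>) \<le> norm (1 + (Tr \<omega>)^2)" by simp
  qed
qed

end


lemma sq_int:
  fixes f h :: "'a \<Rightarrow> real"
  assumes "integrable M (\<lambda>\<omega>. (f \<omega>)^2)" "f \<in> borel_measurable M" "h \<in> borel_measurable M"
    "\<And>\<omega>. \<bar>h \<omega>\<bar> \<le> B" "finite_measure M"
  shows "integrable M (\<lambda>\<omega>. (f \<omega> + h \<omega>)^2)"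
proof (rule Bochner_Integration.integrable_bound)
  show "integrable M (\<lambda>\<omega>. 2 * (f \<omega>)^2 + 2 * B^2)"
    using assms(1,5) by (intro Bochner_Integration.integrable_add integrable_mult_right finite_measure.integrable_const)
  show "(\<lambda>\<omega>. (f \<omega> + h \<omega>)^2) \<in> borel_measurable M" using assms(2,3) by measurable
  show "AE \<omega> in M. norm ((f \<omega> + h \<omega>)^2) \<le> norm (2 * (f \<omega>)^2 + 2 * B^2)"
  proof (intro AE_I2)
    fix \<omega>
    have "(h \<omega>)^2 \<le> B^2" using assms(4)[of \<omega>] abs_le_square_iff[of "h \<omega>" B] by (simp add: power2_abs)
    then have "(f \<omega> + h \<omega>)^2 \<le> 2 * (f \<omega>)^2 + 2 * B^2" using sq_sum[of "f \<omega>" "h \<omega>"] by linarith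
    then show "norm ((f \<omega> + h \<omega>)^2) \<le> norm (2 * (f \<omega>)^2 + 2 * B^2)" by simp
  qed
qed

context cookie3
begin

lemma ee_T_meas[measurable]: "(\<lambda>\<omega>. ee (Tt x \<omega>)) \<in> borel_measurable MM"
  by measurable
lemma gg_T_meas[measurable]: "(\<lambda>\<omega>. gg (Tt x \<omega>)) \<in> borel_measurable MM"
  by measurable

lemma dom1_int: "integrable MM (\<lambda>\<omega>. (real x + K) + Tr \<omega> / 2)"
  using Tr_int by (intro Bochner_Integration.integrable_add P.integrable_const) auto

lemma dom2_int: "integrable MM (\<lambda>\<omega>. (Tr \<omega> / 2 + (real x + K))^2)"
proof (rule sq_int[where B="\<bar>real x + K\<bar>"])
  show "integrable MM (\<lambda>\<omega>. (Tr \<omega> / 2)^2)"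
    using Tr2_int by (simp add: power_divide)
qed (auto simp: P.finite_measure_axioms)

lemma L1: "(\<integral>\<omega>. real x - Tr \<omega> / 2 - ee (Tt x \<omega>) \<partial>MM) = 0"
proof -
  have "(\<lambda>n. \<integral>\<omega>. Dn x n \<omega> \<partial>MM) \<longlonglongrightarrow> (\<integral>\<omega>. real x - Tr \<omega> / 2 - ee (Tt x \<omega>) \<partial>MM)"
  proof (rule integral_dominated_convergence[OF _ _ dom1_int])
    show "(\<lambda>\<omega>. real x - Tr \<omega> / 2 - ee (Tt x \<omega>)) \<in> borel_measurable MM" by measurable
    show "\<And>n. Dn x n \<in> borel_measurable MM" by measurable
    show "AE \<omega> in MM. (\<lambda>n. Dn x n \<omega>) \<longlonglongrightarrow> real x - Tr \<omega> / 2 - ee (Tt x \<omega>)"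
      using AE_reach
    proof (rule AE_mp, intro AE_I2 impI)
      fix \<omega> assume r: "reach \<omega>"
      have "eventually (\<lambda>n. Dn x n \<omega> = real x - Tr \<omega> / 2 - ee (Tt x \<omega>)) sequentially"
        unfolding eventually_sequentially using reach_eventually(2)[OF r] by (intro exI[of _ "Tt x \<omega>"]) auto
      then show "(\<lambda>n. Dn x n \<omega>) \<longlonglongrightarrow> real x - Tr \<omega> / 2 - ee (Tt x \<omega>)"
        by (rule tendsto_eventually)
    qed
    show "AE \<omega> in MM. norm (Dn x n \<omega>) \<le> (real x + K) + Tr \<omega> / 2" for n
      using AE_reach
    proof (rule AE_mp, intro AE_I2 impI)
      fix \<omega> assume r: "reach \<omega>"
      show "norm (Dn x n \<omega>) \<le> (real x + K) + Tr \<omega> / 2" using reach_bounds(2)[OF r, of n] by simp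
    qed
  qed
  then show ?thesis using E1 by (simp add: LIMSEQ_const_iff)
qed

lemma L2: "(\<integral>\<omega>. (real x - Tr \<omega> / 2 - ee (Tt x \<omega>))^2 \<partial>MM) = (\<integral>\<omega>. A * Tr \<omega> + gg (Tt x \<omega>) \<partial>MM)"
proof -
  have a: "(\<lambda>n. \<integral>\<omega>. (Dn x n \<omega>)^2 \<partial>MM) \<longlonglongrightarrow> (\<integral>\<omega>. (real x - Tr \<omega> / 2 - ee (Tt x \<omega>))^2 \<partial>MM)"
  proof (rule integral_dominated_convergence[OF _ _ dom2_int])
    show "(\<lambda>\<omega>. (real x - Tr \<omega> / 2 - ee (Tt x \<omega>))^2) \<in> borel_measurable MM" by measurable
    show "\<And>n. (\<lambda>\<omega>. (Dn x n \<omega>)^2) \<in> borel_measurable MM" by measurable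
    show "AE \<omega> in MM. (\<lambda>n. (Dn x n \<omega>)^2) \<longlonglongrightarrow> (real x - Tr \<omega> / 2 - ee (Tt x \<omega>))^2"
      using AE_reach
    proof (rule AE_mp, intro AE_I2 impI)
      fix \<omega> assume r: "reach \<omega>"
      have "eventually (\<lambda>n. (Dn x n \<omega>)^2 = (real x - Tr \<omega> / 2 - ee (Tt x \<omega>))^2) sequentially"
        unfolding eventually_sequentially using reach_eventually(2)[OF r] by (intro exI[of _ "Tt x \<omega>"]) auto
      then show "(\<lambda>n. (Dn x n \<omega>)^2) \<longlonglongrightarrow> (real x - Tr \<omega> / 2 - ee (Tt x \<omega>))^2"
        by (rule tendsto_eventually)
    qed
    show "AE \<omega> in MM. norm ((Dn x n \<omega>)^2) \<le> (Tr \<omega> / 2 + (real x + K))^2" for n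
      using AE_reach
    proof (rule AE_mp, intro AE_I2 impI)
      fix \<omega> assume r: "reach \<omega>"
      have "\<bar>Dn x n \<omega>\<bar> \<le> Tr \<omega> / 2 + (real x + K)" using reach_bounds(2)[OF r, of n] by simp
      then have "\<bar>Dn x n \<omega>\<bar>^2 \<le> (Tr \<omega> / 2 + (real x + K))^2" by (rule power_mono) simp
      then show "norm ((Dn x n \<omega>)^2) \<le> (Tr \<omega> / 2 + (real x + K))^2" by simp
    qed
  qed
  have b: "(\<lambda>n. \<integral>\<omega>. PQ x n \<omega> \<partial>MM) \<longlonglongrightarrow> (\<integral>\<omega>. A * Tr \<omega> + gg (Tt x \<omega>) \<partial>MM)"
  proof (rule integral_dominated_convergence[where w="\<lambda>\<omega>. A * Tr \<omega> + K"])
    show "integrable MM (\<lambda>\<omega>. A * Tr \<omega> + K)"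
      using Tr_int by (intro Bochner_Integration.integrable_add P.integrable_const integrable_mult_right)
    show "(\<lambda>\<omega>. A * Tr \<omega> + gg (Tt x \<omega>)) \<in> borel_measurable MM" by measurable
    show "\<And>n. PQ x n \<in> borel_measurable MM" by measurable
    show "AE \<omega> in MM. (\<lambda>n. PQ x n \<omega>) \<longlonglongrightarrow> A * Tr \<omega> + gg (Tt x \<omega>)"
      using AE_reach
    proof (rule AE_mp, intro AE_I2 impI)
      fix \<omega> assume r: "reach \<omega>"
      have "eventually (\<lambda>n. PQ x n \<omega> = A * Tr \<omega> + gg (Tt x \<omega>)) sequentially"
        unfolding eventually_sequentially using reach_eventually(3)[OF r] by (intro exI[of _ "Tt x \<omega>"]) auto
      then show "(\<lambda>n. PQ x n \<omega>) \<longlonglongrightarrow> A * Tr \<omega> + gg (Tt x \<omega>)"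
        by (rule tendsto_eventually)
    qed
    show "AE \<omega> in MM. norm (PQ x n \<omega>) \<le> A * Tr \<omega> + K" for n
      using AE_reach
    proof (rule AE_mp, intro AE_I2 impI)
      fix \<omega> assume r: "reach \<omega>"
      show "norm (PQ x n \<omega>) \<le> A * Tr \<omega> + K" using reach_bounds(3)[OF r, of n] by simp
    qed
  qed
  show ?thesis using a b unfolding E2 by (rule LIMSEQ_unique)
qed

end


lemma U_Tt: "U x \<omega> = Tt x \<omega> - x"
  by (simp add: U_def Tt_def Nf_def)

context cookie3
begin

definition C1 where "C1 = 2*(2*A*K + K) + 2*A + 2*K^2"

lemma main_bound:
  "\<bar>(1 / real x) * (\<integral>\<omega>. (real (U x \<omega>) - real x)^2 \<partial>MM) - 8*A\<bar> \<le> 4*C1 / sqrt (real x)"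
proof -
  define e where "e \<omega> = ee (Tt x \<omega>)" for \<omega>
  define g where "g \<omega> = gg (Tt x \<omega>)" for \<omega>
  define W where "W \<omega> = Tr \<omega> / 2 + (e \<omega> - real x)" for \<omega>
  define Y where "Y \<omega> = Tr \<omega> / 2 + (- real x)" for \<omega>
  define s where "s = sqrt (real x)"
  have s1: "s \<ge> 1" using x1 by (simp add: s_def)
  have ss: "s * s = real x" by (simp add: s_def)
  have em[measurable]: "e \<in> borel_measurable MM" unfolding e_def by measurable
  have gm[measurable]: "g \<in> borel_measurable MM" unfolding g_def by measurable
  have Wm[measurable]: "W \<in> borel_measurable MM" unfolding W_def by measurable
  have Ym[measurable]: "Y \<in> borel_measurable MM" unfolding Y_def by measurable
  have eb: "\<bar>e \<omega>\<bar> \<le> K" for \<omega> unfolding e_def by (rule ee_bound)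
  have gb: "\<bar>g \<omega>\<bar> \<le> K" for \<omega> unfolding g_def by (rule gg_bound)
  have e_int: "integrable MM e" by (rule bnd_int[OF em eb])
  have g_int: "integrable MM g" by (rule bnd_int[OF gm gb])
  have e2_int: "integrable MM (\<lambda>\<omega>. (e \<omega>)^2)"
    apply (rule bnd_int[where B="K^2"])
    subgoal by measurable
    subgoal for \<omega> using eb[of \<omega>] abs_le_square_iff[of "e \<omega>" K] by simp
    done
  have Tr2h: "integrable MM (\<lambda>\<omega>. (Tr \<omega> / 2)^2)"
    using Tr2_int by (simp add: power_divide)
  have W2_int: "integrable MM (\<lambda>\<omega>. (W \<omega>)^2)"
  proof -
    have ebx: "\<bar>e \<omega> - real x\<bar> \<le> K + real x" for \<omega>
      by (rule order_trans[OF abs_triangle_ineq4]) (use eb[of \<omega>] in simp)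
    show ?thesis unfolding W_def
      apply (rule sq_int[OF Tr2h _ _ ebx P.finite_measure_axioms])
      subgoal by measurable
      subgoal by measurable
      done
  qed
  have Y2_int: "integrable MM (\<lambda>\<omega>. (Y \<omega>)^2)"
    unfolding Y_def
    by (rule sq_int[OF Tr2h _ _ _ P.finite_measure_axioms, where B="real x"]) auto
  have W_int: "integrable MM W"
    unfolding W_def using Tr_int e_int
    by (intro Bochner_Integration.integrable_add Bochner_Integration.integrable_diff P.integrable_const)
       (auto intro: integrable_divide)
  have IW: "(\<integral>\<omega>. W \<omega> \<partial>MM) = 0"
  proof -
    have eq: "(\<lambda>\<omega>. W \<omega>) = (\<lambda>\<omega>. - (real x - Tr \<omega> / 2 - ee (Tt x \<omega>)))"
      by (auto simp: W_def e_def)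
    have "(\<integral>\<omega>. W \<omega> \<partial>MM) = (\<integral>\<omega>. - (real x - Tr \<omega> / 2 - ee (Tt x \<omega>)) \<partial>MM)"
      by (simp only: eq)
    also have "\<dots> = - (\<integral>\<omega>. real x - Tr \<omega> / 2 - ee (Tt x \<omega>) \<partial>MM)"
      by (rule Bochner_Integration.integral_minus)
    finally show ?thesis using L1 by simp
  qed
  define V where "V = (\<integral>\<omega>. (W \<omega>)^2 \<partial>MM)"
  have V_eq: "V = A * (\<integral>\<omega>. Tr \<omega> \<partial>MM) + (\<integral>\<omega>. g \<omega> \<partial>MM)"
  proof -
    have "(\<lambda>\<omega>. (W \<omega>)^2) = (\<lambda>\<omega>. (real x - Tr \<omega> / 2 - ee (Tt x \<omega>))^2)"
      by (auto simp: W_def e_def power2_eq_square algebra_simps)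
    then have "V = (\<integral>\<omega>. A * Tr \<omega> + gg (Tt x \<omega>) \<partial>MM)" using L2 by (simp add: V_def)
    also have "\<dots> = (\<integral>\<omega>. A * Tr \<omega> + g \<omega> \<partial>MM)" by (simp add: g_def)
    also have "\<dots> = A * (\<integral>\<omega>. Tr \<omega> \<partial>MM) + (\<integral>\<omega>. g \<omega> \<partial>MM)"
      using Tr_int g_int by simp
    finally show ?thesis .
  qed
  have ITr: "(\<integral>\<omega>. Tr \<omega> \<partial>MM) = 2 * real x - 2 * (\<integral>\<omega>. e \<omega> \<partial>MM)"
  proof -
    have "(\<lambda>\<omega>. Tr \<omega>) = (\<lambda>\<omega>. 2 * W \<omega> + 2 * real x - 2 * e \<omega>)"
      by (auto simp: W_def)
    then have "(\<integral>\<omega>. Tr \<omega> \<partial>MM) = (\<integral>\<omega>. 2 * W \<omega> + 2 * real x - 2 * e \<omega> \<partial>MM)" by simp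
    also have "\<dots> = 2 * (\<integral>\<omega>. W \<omega> \<partial>MM) + 2 * real x - 2 * (\<integral>\<omega>. e \<omega> \<partial>MM)"
      using W_int e_int by (simp add: P.prob_space)
    finally show ?thesis using IW by simp
  qed
  have Ie: "\<bar>\<integral>\<omega>. e \<omega> \<partial>MM\<bar> \<le> K"
  proof -
    have "\<bar>\<integral>\<omega>. e \<omega> \<partial>MM\<bar> \<le> (\<integral>\<omega>. \<bar>e \<omega>\<bar> \<partial>MM)" by (rule integral_abs_bound)
    also have "\<dots> \<le> (\<integral>\<omega>. K \<partial>MM)" using e_int eb by (intro integral_mono) auto
    finally show ?thesis by (simp add: P.prob_space)
  qed
  have Ig: "\<bar>\<integral>\<omega>. g \<omega> \<partial>MM\<bar> \<le> K"
  proof -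
    have "\<bar>\<integral>\<omega>. g \<omega> \<partial>MM\<bar> \<le> (\<integral>\<omega>. \<bar>g \<omega>\<bar> \<partial>MM)" by (rule integral_abs_bound)
    also have "\<dots> \<le> (\<integral>\<omega>. K \<partial>MM)" using g_int gb by (intro integral_mono) auto
    finally show ?thesis by (simp add: P.prob_space)
  qed
  have V_close: "\<bar>V - 2 * A * real x\<bar> \<le> 2*A*K + K"
  proof -
    have "V - 2 * A * real x = - 2 * A * (\<integral>\<omega>. e \<omega> \<partial>MM) + (\<integral>\<omega>. g \<omega> \<partial>MM)"
      unfolding V_eq ITr by (simp add: algebra_simps)
    moreover have "\<bar>2 * A * (\<integral>\<omega>. e \<omega> \<partial>MM)\<bar> \<le> 2 * A * K"
      using Ie A_pos by (simp add: abs_mult)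
    ultimately show ?thesis using Ig by linarith
  qed
  have V_nn: "0 \<le> V" unfolding V_def by simp
  have pwb: "\<bar>W \<omega> * e \<omega>\<bar> \<le> (W \<omega>)^2 / (2 * s) + s * K^2 / 2" for \<omega>
  proof -
    have "\<bar>W \<omega> * e \<omega>\<bar> \<le> \<bar>W \<omega>\<bar> * K" using eb[of \<omega>] by (simp add: abs_mult mult_left_mono)
    moreover have "0 \<le> (\<bar>W \<omega>\<bar> - s * K)^2" by simp
    then have "2 * s * (\<bar>W \<omega>\<bar> * K) \<le> (W \<omega>)^2 + s^2 * K^2"
      by (simp add: power2_eq_square algebra_simps)
    then have "\<bar>W \<omega>\<bar> * K \<le> ((W \<omega>)^2 + s^2 * K^2) / (2 * s)"
      using s1 by (simp add: field_simps)
    also have "\<dots> = (W \<omega>)^2 / (2 * s) + s * K^2 / 2"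
      using s1 by (simp add: field_simps power2_eq_square)
    finally show ?thesis by linarith
  qed
  have dom_int: "integrable MM (\<lambda>\<omega>. (W \<omega>)^2 / (2 * s) + s * K^2 / 2)"
    using W2_int by (intro Bochner_Integration.integrable_add P.integrable_const) (auto intro: integrable_divide)
  have We_int: "integrable MM (\<lambda>\<omega>. W \<omega> * e \<omega>)"
  proof (rule Bochner_Integration.integrable_bound[OF dom_int])
    show "(\<lambda>\<omega>. W \<omega> * e \<omega>) \<in> borel_measurable MM" by measurable
    show "AE \<omega> in MM. norm (W \<omega> * e \<omega>) \<le> norm ((W \<omega>)^2 / (2 * s) + s * K^2 / 2)"
    proof (intro AE_I2)
      fix \<omega>
      have "0 \<le> (W \<omega>)^2 / (2 * s) + s * K^2 / 2" using s1 by simp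
      then show "norm (W \<omega> * e \<omega>) \<le> norm ((W \<omega>)^2 / (2 * s) + s * K^2 / 2)"
        using pwb[of \<omega>] by simp
    qed
  qed
  have IWe: "\<bar>\<integral>\<omega>. W \<omega> * e \<omega> \<partial>MM\<bar> \<le> V / (2 * s) + s * K^2 / 2"
  proof -
    have "\<bar>\<integral>\<omega>. W \<omega> * e \<omega> \<partial>MM\<bar> \<le> (\<integral>\<omega>. \<bar>W \<omega> * e \<omega>\<bar> \<partial>MM)" by (rule integral_abs_bound)
    also have "\<dots> \<le> (\<integral>\<omega>. (W \<omega>)^2 / (2 * s) + s * K^2 / 2 \<partial>MM)"
      using We_int dom_int pwb by (intro integral_mono) auto
    also have "\<dots> = V / (2 * s) + s * K^2 / 2"
      using W2_int by (simp add: V_def P.prob_space)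
    finally show ?thesis .
  qed
  have Ie2: "0 \<le> (\<integral>\<omega>. (e \<omega>)^2 \<partial>MM)" "(\<integral>\<omega>. (e \<omega>)^2 \<partial>MM) \<le> K^2"
  proof -
    show "0 \<le> (\<integral>\<omega>. (e \<omega>)^2 \<partial>MM)" by simp
    have "(\<integral>\<omega>. (e \<omega>)^2 \<partial>MM) \<le> (\<integral>\<omega>. K^2 \<partial>MM)"
    proof (intro integral_mono e2_int P.integrable_const)
      fix \<omega> show "(e \<omega>)^2 \<le> K^2" using eb[of \<omega>] abs_le_square_iff[of "e \<omega>" K] K_nonneg by simp
    qed
    then show "(\<integral>\<omega>. (e \<omega>)^2 \<partial>MM) \<le> K^2" by (simp add: P.prob_space)
  qed
  have IY2: "(\<integral>\<omega>. (Y \<omega>)^2 \<partial>MM) = V - 2 * (\<integral>\<omega>. W \<omega> * e \<omega> \<partial>MM) + (\<integral>\<omega>. (e \<omega>)^2 \<partial>MM)"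
  proof -
    have "(\<lambda>\<omega>. (Y \<omega>)^2) = (\<lambda>\<omega>. (W \<omega>)^2 - 2 * (W \<omega> * e \<omega>) + (e \<omega>)^2)"
      by (auto simp: Y_def W_def power2_eq_square algebra_simps)
    then show ?thesis using W2_int We_int e2_int by (simp add: V_def)
  qed
  have c1nn: "0 \<le> 2*A*K + K" using A_pos K_nonneg by simp
  have Vs: "V / s \<le> 2 * A * s + (2*A*K + K)"
  proof -
    have "V \<le> 2 * A * (s * s) + (2*A*K + K)" using V_close ss by simp
    then have "V / s \<le> (2 * A * (s * s) + (2*A*K + K)) / s" using s1 by (simp add: divide_right_mono)
    also have "\<dots> = 2 * A * s + (2*A*K + K) / s" using s1 by (simp add: field_simps)
    also have "(2*A*K + K) / s \<le> 2*A*K + K"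
      using divide_left_mono[OF s1 c1nn] s1 by simp
    finally show ?thesis by simp
  qed
  have keyY: "\<bar>(\<integral>\<omega>. (Y \<omega>)^2 \<partial>MM) - 2 * A * real x\<bar> \<le> C1 * s"
  proof -
    have "\<bar>(\<integral>\<omega>. (Y \<omega>)^2 \<partial>MM) - 2 * A * real x\<bar> \<le> (2*A*K + K) + V / s + s * K^2 + K^2"
    proof -
      have h1: "V - 2 * A * real x \<le> 2*A*K + K" "- (2*A*K + K) \<le> V - 2 * A * real x"
        using V_close by (simp_all add: abs_le_iff)
      have h2: "(\<integral>\<omega>. W \<omega> * e \<omega> \<partial>MM) \<le> V / (2 * s) + s * K^2 / 2"
        "- (\<integral>\<omega>. W \<omega> * e \<omega> \<partial>MM) \<le> V / (2 * s) + s * K^2 / 2"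
        using IWe by (simp_all add: abs_le_iff)
      have h3: "V / (2 * s) = (V / s) / 2" by simp
      show ?thesis unfolding abs_le_iff IY2 using h1 h2 h3 Ie2 by linarith
    qed
    also have "\<dots> \<le> (2*A*K + K) + (2 * A * s + (2*A*K + K)) + s * K^2 + s * K^2"
      using Vs mult_right_mono[OF s1, of "K^2"] by simp
    also have "\<dots> \<le> C1 * s"
    proof -
      have a: "(2*A*K + K) \<le> (2*A*K + K) * s" using mult_left_mono[OF s1 c1nn] by simp
      have b: "C1 * s = 2*((2*A*K + K) * s) + 2*(A * s) + 2*(s*K^2)" unfolding C1_def by (simp add: algebra_simps)
      have c: "2 * A * s = 2 * (A * s)" by simp
      show ?thesis unfolding b c using a by linarith
    qed
    finally show ?thesis .
  qed
  have IU: "(\<integral>\<omega>. (real (U x \<omega>) - real x)^2 \<partial>MM) = 4 * (\<integral>\<omega>. (Y \<omega>)^2 \<partial>MM)"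
  proof -
    have "(\<integral>\<omega>. (real (U x \<omega>) - real x)^2 \<partial>MM) = (\<integral>\<omega>. 4 * (Y \<omega>)^2 \<partial>MM)"
    proof (rule integral_cong_AE)
      have eqU: "U x = (\<lambda>\<omega>. Tt x \<omega> - x)" by (rule ext) (rule U_Tt)
      show "(\<lambda>\<omega>. (real (U x \<omega>) - real x)^2) \<in> borel_measurable MM" unfolding eqU by measurable
      show "(\<lambda>\<omega>. 4 * (Y \<omega>)^2) \<in> borel_measurable MM" by measurable
      show "AE \<omega> in MM. (real (U x \<omega>) - real x)^2 = 4 * (Y \<omega>)^2"
        using AE_reach
      proof (rule AE_mp, intro AE_I2 impI)
        fix \<omega> assume r: "reach \<omega>"
        have "x \<le> Tt x \<omega>" using r Tt_ge by blast
        then have "real (U x \<omega>) = Tr \<omega> - real x" by (simp add: U_Tt of_nat_diff)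
        then have "real (U x \<omega>) - real x = 2 * Y \<omega>" by (simp add: Y_def)
        then show "(real (U x \<omega>) - real x)^2 = 4 * (Y \<omega>)^2"
          by (simp add: power_mult_distrib)
      qed
    qed
    then show ?thesis by simp
  qed
  have xpos: "real x > 0" using x1 by simp
  define I where "I = (\<integral>\<omega>. (Y \<omega>)^2 \<partial>MM)"
  have e: "(1 / real x) * (4 * I) - 8*A = 4 * (I - 2 * A * real x) / real x"
    using xpos by (simp add: field_simps)
  have "\<bar>(1 / real x) * (\<integral>\<omega>. (real (U x \<omega>) - real x)^2 \<partial>MM) - 8*A\<bar>
      = 4 * \<bar>(\<integral>\<omega>. (Y \<omega>)^2 \<partial>MM) - 2 * A * real x\<bar> / real x"
    unfolding IU I_def[symmetric] e abs_divide abs_mult using xpos by simp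
  also have "\<dots> \<le> 4 * (C1 * s) / real x"
    using keyY xpos by (simp add: divide_right_mono)
  also have "\<dots> = 4 * (C1 * s) / (s * s)" using ss by simp
  also have "\<dots> = 4 * C1 / s" using s1 by simp
  finally show ?thesis by (simp add: s_def)
qed

end


theorem lemma2p2:
  fixes p :: "nat \<Rightarrow> real" and A :: real
  assumes p01: "\<And>i. 0 \<le> p i \<and> p i \<le> 1"
    and pbar_lim: "pbar p \<longlonglongrightarrow> 1/2"
    and A_lim: "Avg p \<longlonglongrightarrow> A"
    and A_pos: "A > 0"
    and rate: "\<exists>K. \<forall>n\<ge>1. \<bar>pbar p n - 1/2\<bar> \<le> K / real n \<and> \<bar>Avg p n - A\<bar> \<le> K / real n"
  shows "((\<lambda>x. (1 / real x) * (\<integral>\<omega>. (real (U x \<omega>) - real x)^2 \<partial>cookie_space p))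
           \<longlonglongrightarrow> 8 * A)
    \<and> (\<exists>C. \<exists>x0\<ge>1. \<forall>x\<ge>x0.
           \<bar>(1 / real x) * (\<integral>\<omega>. (real (U x \<omega>) - real x)^2 \<partial>cookie_space p) - 8 * A\<bar>
             \<le> C * ln (real x) ^ 4 / sqrt (real x))"
proof -
  obtain K where K: "\<And>n. n \<ge> 1 \<Longrightarrow> \<bar>pbar p n - 1/2\<bar> \<le> K / real n \<and> \<bar>Avg p n - A\<bar> \<le> K / real n"
    using rate by blast
  interpret c2: cookie2 p A K
    by unfold_locales (use p01 K A_pos in auto)
  define C where "C = 4 * (2*(2*A*K + K) + 2*A + 2*K^2)"
  define f where "f x = (1 / real x) * (\<integral>\<omega>. (real (U x \<omega>) - real x)^2 \<partial>cookie_space p)" for x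
  have C_nn: "0 \<le> C" unfolding C_def using A_pos c2.K_nonneg by simp
  have bound: "\<bar>f x - 8 * A\<bar> \<le> C / sqrt (real x)" if x: "x \<ge> 1" for x
  proof -
    interpret c3: cookie3 p A K x by unfold_locales (rule x)
    show ?thesis using c3.main_bound unfolding c3.C1_def C_def f_def by simp
  qed
  have lim0: "(\<lambda>x. C / sqrt (real x)) \<longlonglongrightarrow> 0"
    by (rule tendsto_divide_0[OF tendsto_const])
       (rule filterlim_at_top_imp_at_infinity[OF filterlim_compose[OF sqrt_at_top filterlim_real_sequentially]])
  have "(\<lambda>x. f x - 8 * A) \<longlonglongrightarrow> 0"
  proof (rule Lim_null_comparison[OF _ lim0])
    show "eventually (\<lambda>x. norm (f x - 8 * A) \<le> C / sqrt (real x)) sequentially"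
      unfolding eventually_sequentially using bound by (intro exI[of _ 1]) auto
  qed
  then have part1: "f \<longlonglongrightarrow> 8 * A" by (rule LIM_zero_cancel)
  have part2: "\<bar>f x - 8 * A\<bar> \<le> C * ln (real x) ^ 4 / sqrt (real x)" if x: "x \<ge> 3" for x
  proof -
    have "exp 1 \<le> real x" using exp_le x by linarith
    then have "1 \<le> ln (real x)" using x by (simp add: ln_ge_iff)
    then have l: "1 \<le> ln (real x) ^ 4" by (simp add: one_le_power)
    have "C / sqrt (real x) \<le> C * ln (real x) ^ 4 / sqrt (real x)"
      using l C_nn by (intro divide_right_mono) (auto simp: mult_le_cancel_left1 intro: order_trans[OF _ mult_left_mono[OF l]])
    then show ?thesis using bound[of x] x by simp
  qed
  show ?thesis
    using part1 part2 unfolding f_def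
    by (intro conjI exI[of _ C] exI[of _ "3::nat"]) auto
qed


end
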